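(* Let $Q:[0,k_{\text{crit}}]\to[0,\infty)$ be three times differentiable, strictly increasing with $Q'>0$, concave ($Q''\le 0$), with $Q(0)=0$ and $Q'''\le 0$. Let $k(q)$ denote the inverse function of $Q$ on $[0,Q(k_{\text{crit}})]$ and define $\frac{dN}{dx}(q)=q\,k'(q)-k(q)$. Then $\frac{dN}{dx}$ is monotonically increasing and convex in $q$.
   Context: $Q$ is the free-flow branch of a traffic fundamental diagram (flow as a function of density); the condition $Q'''\le 0$ corresponds to aggressive driving ($v''(k)\le0$ for $v(k)=Q(k)/k$). The quantity $q k'(q)-k(q)$ is the rate of change of the cumulative vehicle count per unit distance along a kinematic wave carrying constant flow $q$. *)

theory Defs
  imports "HOL-Analysis.Analysis"
begin

end

theory Submission
  imports Defs
begin

lemma incr_within: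
  fixes f f' :: "real \<Rightarrow> real"
  assumes "a \<le> x" "x \<le> y" "y \<le> b"
    and d: "\<And>t. t \<in> {a..b} \<Longrightarrow> (f has_real_derivative f' t) (at t within {a..b})"
    and nn: "\<And>t. t \<in> {a..b} \<Longrightarrow> f' t \<ge> 0"
  shows "f x \<le> f y"
proof (rule DERIV_nonneg_imp_increasing_open[OF \<open>x \<le> y\<close>])
  show "\<exists>z. (f has_real_derivative z) (at t) \<and> 0 \<le> z" if "x < t" "t < y" for t
    using d[of t] nn[of t] that assms(1-3) at_within_Icc_at[of a t b] by auto
  have "continuous_on {a..b} f" using d by (rule DERIV_continuous_on)
  then show "continuous_on {x..y} f" by (rule continuous_on_subset) (use assms in auto)
qed

lemma conv_within:
  fixes f f' :: "real \<Rightarrow> real"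
  assumes d: "\<And>t. t \<in> {a..b} \<Longrightarrow> (f has_real_derivative f' t) (at t within {a..b})"
    and mo: "\<And>s t. s \<in> {a..b} \<Longrightarrow> t \<in> {a..b} \<Longrightarrow> s \<le> t \<Longrightarrow> f' s \<le> f' t"
  shows "convex_on {a..b} f"
proof (rule convex_on_linorderI)
  show "convex {a..b}" by simp
next
  fix t x y :: real
  assume t: "t > 0" "t < 1"
  assume xy: "x \<in> {a..b}" "y \<in> {a..b}" "x < y"
  have cont: "continuous_on {a..b} f" using d by (rule DERIV_continuous_on)
  have dat: "(f has_real_derivative f' s) (at s)" if "a < s" "s < b" for s
    using d[of s] that at_within_Icc_at[of a s b] by auto
  have difa: "f differentiable (at s)" if "a < s" "s < b" for s
    using dat[OF that] real_differentiable_def by blast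
  define z where "z = (1 - t) * x + t * y"
  from xy t have xz: "z > x" by (simp add: z_def algebra_simps)
  have "y - z = (1 - t) * (y - x)" by (simp add: z_def algebra_simps)
  also from xy t have "\<dots> > 0" by (intro mult_pos_pos) simp_all
  finally have yz: "z < y" by simp
  have "\<exists>l w. x < w \<and> w < z \<and> DERIV f w :> l \<and> f z - f x = (z - x) * l"
    by (rule MVT[OF xz]) (use xy yz difa cont in \<open>auto intro: continuous_on_subset\<close>)
  then obtain l \<xi> where \<xi>: "\<xi> > x" "\<xi> < z" "DERIV f \<xi> :> l" "f z - f x = (z - x) * l" by auto
  have "l = f' \<xi>" using DERIV_unique[OF \<xi>(3) dat[of \<xi>]] \<xi> xy yz by auto
  have "\<exists>l w. z < w \<and> w < y \<and> DERIV f w :> l \<and> f y - f z = (y - z) * l"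
    by (rule MVT[OF yz]) (use xy xz difa cont in \<open>auto intro: continuous_on_subset\<close>)
  then obtain m \<eta> where \<eta>: "\<eta> > z" "\<eta> < y" "DERIV f \<eta> :> m" "f y - f z = (y - z) * m" by auto
  have "m = f' \<eta>" using DERIV_unique[OF \<eta>(3) dat[of \<eta>]] \<eta> xy xz by auto
  have "f' \<xi> \<le> f' \<eta>" using mo[of \<xi> \<eta>] \<xi> \<eta> xy by auto
  then have "(f y - f z) * (z - x) \<ge> (f z - f x) * (y - z)"
    using \<xi>(4) \<eta>(4) \<open>l = _\<close> \<open>m = _\<close> xz yz by (simp add: mult_left_mono mult.commute mult.left_commute)
  also have "z - x = t * (y - x)" by (simp add: z_def algebra_simps)
  also have "y - z = (1 - t) * (y - x)" by (simp add: z_def algebra_simps)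
  finally have "(f y - f z) * t \<ge> (f z - f x) * (1 - t)" using xy by simp
  then show "(1 - t) * f x + t * f y \<ge> f ((1 - t) *\<^sub>R x + t *\<^sub>R y)"
    by (simp add: z_def algebra_simps)
qed

theorem lemma5:
  fixes Q Q1 Q2 Q3 :: "real \<Rightarrow> real" and kc :: real
    and k k' :: "real \<Rightarrow> real"
  assumes kc_pos: "kc > 0"
    and Q_range: "\<And>x. x \<in> {0..kc} \<Longrightarrow> Q x \<ge> 0"
    and dQ: "\<And>x. x \<in> {0..kc} \<Longrightarrow> (Q has_real_derivative Q1 x) (at x within {0..kc})"
    and dQ1: "\<And>x. x \<in> {0..kc} \<Longrightarrow> (Q1 has_real_derivative Q2 x) (at x within {0..kc})"
    and dQ2: "\<And>x. x \<in> {0..kc} \<Longrightarrow> (Q2 has_real_derivative Q3 x) (at x within {0..kc})"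
    and Q_strict: "strict_mono_on {0..kc} Q"
    and Q1_pos: "\<And>x. x \<in> {0..kc} \<Longrightarrow> Q1 x > 0"
    and Q2_nonpos: "\<And>x. x \<in> {0..kc} \<Longrightarrow> Q2 x \<le> 0"
    and Q3_nonpos: "\<And>x. x \<in> {0..kc} \<Longrightarrow> Q3 x \<le> 0"
    and Q0: "Q 0 = 0"
    and k_inv1: "\<And>x. x \<in> {0..kc} \<Longrightarrow> k (Q x) = x"
    and k_inv2: "\<And>q. q \<in> {0..Q kc} \<Longrightarrow> k q \<in> {0..kc} \<and> Q (k q) = q"
    and dk: "\<And>q. q \<in> {0..Q kc} \<Longrightarrow> (k has_real_derivative k' q) (at q within {0..Q kc})"
  shows "mono_on {0..Q kc} (\<lambda>q. q * k' q - k q) \<and> convex_on {0..Q kc} (\<lambda>q. q * k' q - k q)"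
proof -
  define D where "D = Q kc"
  have D_pos: "D > 0" using Q_strict kc_pos Q0 unfolding D_def
    by (metis atLeastAtMost_iff less_eq_real_def strict_mono_onD)
  have kmono: "k p \<le> k q" if "p \<in> {0..D}" "q \<in> {0..D}" "p \<le> q" for p q
  proof (rule ccontr)
    assume "\<not> k p \<le> k q"
    have a: "k q \<in> {0..kc}" "k p \<in> {0..kc}" "Q (k q) = q" "Q (k p) = p"
      using k_inv2 that unfolding D_def by auto
    have "Q (k q) < Q (k p)" using strict_mono_onD[OF Q_strict a(1,2)] \<open>\<not> k p \<le> k q\<close> by auto
    then show False using a that by auto
  qed
  have kin: "k q \<in> {0..kc}" if "q \<in> {0..D}" for q using k_inv2 that unfolding D_def by auto
  have Q1dec: "Q1 y \<le> Q1 x" if "x \<in> {0..kc}" "y \<in> {0..kc}" "x \<le> y" for x y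
  proof -
    have "(\<lambda>x. - Q1 x) x \<le> (\<lambda>x. - Q1 x) y"
      by (rule incr_within[where f'="\<lambda>x. - Q2 x" and a=0 and b=kc])
        (use that dQ1 Q2_nonpos in \<open>auto intro: derivative_eq_intros\<close>)
    then show ?thesis by simp
  qed
  have Q2dec: "Q2 y \<le> Q2 x" if "x \<in> {0..kc}" "y \<in> {0..kc}" "x \<le> y" for x y
  proof -
    have "(\<lambda>x. - Q2 x) x \<le> (\<lambda>x. - Q2 x) y"
      by (rule incr_within[where f'="\<lambda>x. - Q3 x" and a=0 and b=kc])
        (use that dQ2 Q3_nonpos in \<open>auto intro: derivative_eq_intros\<close>)
    then show ?thesis by simp
  qed
  have k'eq: "k' q = 1 / Q1 (k q)" if q: "q \<in> {0..D}" for q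
  proof -
    have sub: "k ` {0..D} \<subseteq> {0..kc}" using kin by auto
    have "(Q \<circ> k has_real_derivative Q1 (k q) * k' q) (at q within {0..D})"
      by (rule DERIV_image_chain[OF has_field_derivative_subset[OF dQ[OF kin[OF q]] sub]])
        (use dk q in \<open>auto simp: D_def\<close>)
    then have d1: "((\<lambda>x. x) has_real_derivative Q1 (k q) * k' q) (at q within {0..D})"
      by (rule has_field_derivative_transform_within[OF _ zero_less_one q])
        (use k_inv2 in \<open>auto simp: D_def\<close>)
    have d2: "((\<lambda>x. x) has_real_derivative 1) (at q within {0..D})" by (rule DERIV_ident)
    have "Q1 (k q) * k' q = 1"
      apply (rule vector_derivative_unique_within_closed_interval[of 0 D q "\<lambda>x. x"])
      using D_pos q d1 d2 by (simp_all add: has_real_derivative_iff_has_vector_derivative[symmetric])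
    then show ?thesis using Q1_pos[OF kin[OF q]] by (simp add: field_simps)
  qed
  define G where "G q = q / Q1 (k q) - k q" for q
  define g where "g q = q * (- Q2 (k q) / Q1 (k q) ^ 3)" for q
  have FG: "q * k' q - k q = G q" if "q \<in> {0..D}" for q
    using k'eq[OF that] by (simp add: G_def)
  have dG: "(G has_real_derivative g q) (at q within {0..D})" if q: "q \<in> {0..D}" for q
  proof -
    have sub: "k ` {0..D} \<subseteq> {0..kc}" using kin by auto
    have dk1: "(k has_real_derivative 1 / Q1 (k q)) (at q within {0..D})"
      using dk[of q] q k'eq[OF q] by (simp add: D_def)
    have dQ1k: "(Q1 \<circ> k has_real_derivative Q2 (k q) * (1 / Q1 (k q))) (at q within {0..D})"
      by (rule DERIV_image_chain[OF has_field_derivative_subset[OF dQ1[OF kin[OF q]] sub] dk1])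
    then have dQ1k': "((\<lambda>x. Q1 (k x)) has_real_derivative Q2 (k q) * (1 / Q1 (k q))) (at q within {0..D})"
      by (simp add: o_def)
    have pos: "Q1 (k q) > 0" using Q1_pos[OF kin[OF q]] .
    have "(G has_real_derivative
        ((1 * Q1 (k q) - q * (Q2 (k q) * (1 / Q1 (k q)))) / (Q1 (k q) * Q1 (k q)) - 1 / Q1 (k q)))
        (at q within {0..D})"
      unfolding G_def
      by (rule DERIV_diff[OF DERIV_divide[OF DERIV_ident dQ1k'] dk1]) (use pos in auto)
    moreover have "(1 * Q1 (k q) - q * (Q2 (k q) * (1 / Q1 (k q)))) / (Q1 (k q) * Q1 (k q)) - 1 / Q1 (k q) = g q"
      using pos by (simp add: g_def field_simps power3_eq_cube)
    ultimately show ?thesis by simp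
  qed
  have g_nn: "g q \<ge> 0" if q: "q \<in> {0..D}" for q
    using Q1_pos[OF kin[OF q]] Q2_nonpos[OF kin[OF q]] q unfolding g_def
    by (intro mult_nonneg_nonneg divide_nonneg_pos) auto
  have g_mono: "g p \<le> g q" if p: "p \<in> {0..D}" and q: "q \<in> {0..D}" and pq: "p \<le> q" for p q
  proof -
    have kk: "k p \<le> k q" using kmono p q pq .
    have a1: "- Q2 (k p) \<le> - Q2 (k q)" using Q2dec[OF kin[OF p] kin[OF q] kk] by simp
    have a2: "Q1 (k q) \<le> Q1 (k p)" using Q1dec[OF kin[OF p] kin[OF q] kk] .
    have p1: "Q1 (k q) > 0" "Q1 (k p) > 0" using Q1_pos kin p q by auto
    have a3: "1 / Q1 (k p) ^ 3 \<le> 1 / Q1 (k q) ^ 3"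
      using p1 a2 by (intro divide_left_mono power_mono mult_pos_pos) auto
    have n1: "0 \<le> - Q2 (k p)" using Q2_nonpos kin p by (simp)
    have "- Q2 (k p) * (1 / Q1 (k p) ^ 3) \<le> - Q2 (k q) * (1 / Q1 (k q) ^ 3)"
      by (rule mult_mono[OF a1 a3]) (use n1 a1 p1 in auto)
    then have h: "- Q2 (k p) / Q1 (k p) ^ 3 \<le> - Q2 (k q) / Q1 (k q) ^ 3" by simp
    have h0: "0 \<le> - Q2 (k p) / Q1 (k p) ^ 3" using n1 p1 by (intro divide_nonneg_pos) auto
    show ?thesis unfolding g_def by (rule mult_mono[OF pq h]) (use p q h0 in auto)
  qed
  have monoG: "mono_on {0..D} G"
    by (rule mono_onI, rule incr_within[where f'=g and a=0 and b=D]) (use dG g_nn in auto)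
  have convG: "convex_on {0..D} G"
    by (rule conv_within[where f'=g]) (use dG g_mono in auto)
  show ?thesis
  proof
    show "mono_on {0..Q kc} (\<lambda>q. q * k' q - k q)"
      using monoG FG unfolding D_def by (auto intro!: mono_onI dest: mono_onD)
  next
    show "convex_on {0..Q kc} (\<lambda>q. q * k' q - k q)"
    proof (rule convex_on_linorderI)
      show "convex {0..Q kc}" by simp
      fix t x y :: real
      assume t: "t > 0" "t < 1" and xy: "x \<in> {0..Q kc}" "y \<in> {0..Q kc}" "x < y"
      have zin: "(1 - t) *\<^sub>R x + t *\<^sub>R y \<in> {0..D}"
        using convexD[of "{0..D}" x y "1 - t" t] xy t unfolding D_def by auto
      have "G ((1 - t) *\<^sub>R x + t *\<^sub>R y) \<le> (1 - t) * G x + t * G y"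
        using convex_onD[OF convG, of t x y] t xy unfolding D_def by (auto simp: algebra_simps)
      then show "((1 - t) *\<^sub>R x + t *\<^sub>R y) * k' ((1 - t) *\<^sub>R x + t *\<^sub>R y) - k ((1 - t) *\<^sub>R x + t *\<^sub>R y)
          \<le> (1 - t) * (x * k' x - k x) + t * (y * k' y - k y)"
        using FG[OF zin] FG[of x] FG[of y] xy unfolding D_def by auto
    qed
  qed
qed


end
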